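(* Consider the following model. A principal P and an agent A interact over two periods $t\in\{1,2\}$. States $\omega_t\in\{0,1\}$ satisfy $\Pr[\omega_1=1]=\mu_0\in(0,1)$ and $\Pr[\omega_2=\omega\mid\omega_1=\omega]=\rho\in(1/2,1)$. In each period A chooses $e_t\in\{0,1\}$; if $e_t=1$ he observes $\omega_t$, if $e_t=0$ he observes $\omega_t$ with probability $\pi\in(0,1)$ and nothing otherwise. A reports $r_t\in\{\varnothing,\omega_t\}$ if he observed $\omega_t$, else $r_t=\varnothing$. P chooses $x=\hat x(r_1,r_2)\in\{0,1\}$ at the end of period 2. Payoffs: P gets $\mathbb{1}[x=\omega_2]-k(e_1+e_2)$, A gets $x-c(e_1+e_2)$, $c,k>0$. A mechanism consists of $\sigma_1\in\{0,1\}$, $\sigma_2:\{\varnothing,0,1\}\to\{0,1\}$, $\hat x:\{\varnothing,0,1\}^2\to\{0,1\}$, to which P commits; A best-responds, following the recommendation and disclosing when indifferent. A mechanism is IC if at every history occurring with positive probability A optimally obeys the testing recommendation and discloses every observed result, and $\hat x(r_1,\varnothing)=0$ whenever $\sigma_2(r_1)=1$. Let $\kappa=k/(1-\pi)$, $\gamma=c/(1-\pi)$, $\mu_2(\varnothing)=\rho\mu_0+(1-\rho)(1-\mu_0)$, $\bar\kappa=(1-\rho)/(1-\pi)$, $\bar\gamma=(1-\rho)[\mu_0-(1-\mu_0)(1-\pi)]/\pi$, and assume $\kappa\in(1-\rho,\min\{\mu_2(\varnothing),1-\mu_2(\varnothing)\}]$ and $\gamma\in(1-\rho,\mu_2(\varnothing)]$.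 Then a mechanism maximizing P's expected payoff among IC mechanisms has $\sigma_1=0$ and: (i) if $\kappa>\bar\kappa$ and $\gamma\ge\bar\gamma$: $\sigma_2(r_1)=\mathbb{1}[r_1=\varnothing]$ and $\hat x(r_1,r_2)=\mathbb{1}[r_1=1]+\mathbb{1}[r_1\neq1]\mathbb{1}[r_2=1]$; (ii) if $\kappa\in(1-\rho,\bar\kappa)$ or $\gamma<\bar\gamma$: $\sigma_2(0)=0$, $\sigma_2(1)=1$, $\sigma_2(\varnothing)=1$, and $\hat x(r_1,r_2)=\mathbb{1}[r_2=1]$; (iii) if $\kappa=\bar\kappa$, either of the two previous mechanisms is optimal.
   Context: P's expected payoff is the expected value of $\mathbb{1}[\hat x(r_1,r_2)=\omega_2]-k(e_1+e_2)$ under the behavior induced by the mechanism. Every mechanism's outcomes can be replicated by an IC mechanism, so optimality among IC mechanisms is optimality among all mechanisms. *)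

theory Defs
  imports Complex_Main
begin

text \<open>States and the decision are encoded as bool
  (True = 1, False = 0).  Signals / reports are encoded as bool option:
  None = nothing observed / empty report (the symbol varnothing),
  Some w = the state w was observed / reported.\<close>

definition prior :: "real \<Rightarrow> real \<Rightarrow> bool \<Rightarrow> bool \<Rightarrow> real" where
  "prior \<mu>0 \<rho> \<omega>1 \<omega>2 =
     (if \<omega>1 then \<mu>0 else 1 - \<mu>0) * (if \<omega>2 = \<omega>1 then \<rho> else 1 - \<rho>)"

definition obs :: "real \<Rightarrow> bool \<Rightarrow> bool \<Rightarrow> bool option \<Rightarrow> real" where
  "obs \<pi> e \<omega> s =
     (if e then (if s = Some \<omega> then 1 else 0)
      else (if s = Some \<omega> then \<pi> else if s = None then 1 - \<pi> else 0))"

definition reach1 :: "real \<Rightarrow> real \<Rightarrow> real \<Rightarrow> bool \<Rightarrow> bool option \<Rightarrow> real" where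
  "reach1 \<mu>0 \<rho> \<pi> e1 s1 =
     (\<Sum>\<omega>1\<in>UNIV. \<Sum>\<omega>2\<in>UNIV. prior \<mu>0 \<rho> \<omega>1 \<omega>2 * obs \<pi> e1 \<omega>1 s1)"

definition natw :: "real \<Rightarrow> real \<Rightarrow> real \<Rightarrow> bool \<Rightarrow> bool option \<Rightarrow> bool \<Rightarrow> bool option \<Rightarrow> real" where
  "natw \<mu>0 \<rho> \<pi> e1 s1 e2 s2 =
     (\<Sum>\<omega>1\<in>UNIV. \<Sum>\<omega>2\<in>UNIV. prior \<mu>0 \<rho> \<omega>1 \<omega>2 * obs \<pi> e1 \<omega>1 s1 * obs \<pi> e2 \<omega>2 s2)"

definition agent_u :: "real \<Rightarrow> (bool option \<Rightarrow> bool option \<Rightarrow> bool) \<Rightarrow>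
    bool option \<Rightarrow> bool option \<Rightarrow> bool \<Rightarrow> bool \<Rightarrow> real" where
  "agent_u c xh r1 r2 e1 e2 = of_bool (xh r1 r2) - c * (of_bool e1 + of_bool e2)"

text \<open>Agent (pure) strategies, defined at all of the agent's histories:
  E1 :: bool                                   (period-1 effort),
  R1 :: bool => signal => report               (period-1 report, given e1, s1),
  E2 :: bool => signal => report => bool       (period-2 effort, given e1, s1, r1),
  R2 :: bool => signal => report => bool => signal => report
                                               (period-2 report, given e1, s1, r1, e2, s2).\<close>

definition feasible_rep ::
  "(bool \<Rightarrow> bool option \<Rightarrow> bool option) \<Rightarrow>
   (bool \<Rightarrow> bool option \<Rightarrow> bool option \<Rightarrow> bool \<Rightarrow> bool option \<Rightarrow> bool option) \<Rightarrow> bool" where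
  "feasible_rep R1 R2 \<longleftrightarrow>
     (\<forall>e s. R1 e s = None \<or> R1 e s = s) \<and>
     (\<forall>e1 s1 r1 e2 s2. R2 e1 s1 r1 e2 s2 = None \<or> R2 e1 s1 r1 e2 s2 = s2)"

text \<open>Agent's (unnormalised) continuation values: expected payoff restricted to the
  event that the given history is reached (division by the positive probability of the
  history does not affect comparisons).\<close>

definition V2 where
  "V2 \<mu>0 \<rho> \<pi> c xh e1 s1 r1 E2 R2 =
     (\<Sum>s2\<in>UNIV. natw \<mu>0 \<rho> \<pi> e1 s1 (E2 e1 s1 r1) s2 *
        agent_u c xh r1 (R2 e1 s1 r1 (E2 e1 s1 r1) s2) e1 (E2 e1 s1 r1))"

definition V1 where
  "V1 \<mu>0 \<rho> \<pi> c xh e1 s1 R1 E2 R2 = V2 \<mu>0 \<rho> \<pi> c xh e1 s1 (R1 e1 s1) E2 R2"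

definition V0 where
  "V0 \<mu>0 \<rho> \<pi> c xh E1 R1 E2 R2 = (\<Sum>s1\<in>UNIV. V1 \<mu>0 \<rho> \<pi> c xh E1 s1 R1 E2 R2)"

definition IC :: "real \<Rightarrow> real \<Rightarrow> real \<Rightarrow> real \<Rightarrow> bool \<Rightarrow> (bool option \<Rightarrow> bool) \<Rightarrow>
    (bool option \<Rightarrow> bool option \<Rightarrow> bool) \<Rightarrow> bool" where
  "IC \<mu>0 \<rho> \<pi> c \<sigma>1 \<sigma>2 xh \<longleftrightarrow>
     (let oR1 = (\<lambda>e s. s); oE2 = (\<lambda>e s r. \<sigma>2 r); oR2 = (\<lambda>e1 s1 r1 e2 s2. s2) in
     (\<forall>r1. \<sigma>2 r1 \<longrightarrow> \<not> xh r1 None) \<and>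
     (\<forall>E1 R1 E2 R2. feasible_rep R1 R2 \<longrightarrow>
        V0 \<mu>0 \<rho> \<pi> c xh E1 R1 E2 R2 \<le> V0 \<mu>0 \<rho> \<pi> c xh \<sigma>1 oR1 oE2 oR2) \<and>
     (\<forall>s1. reach1 \<mu>0 \<rho> \<pi> \<sigma>1 s1 > 0 \<longrightarrow> (\<forall>R1 E2 R2. feasible_rep R1 R2 \<longrightarrow>
        V1 \<mu>0 \<rho> \<pi> c xh \<sigma>1 s1 R1 E2 R2 \<le> V1 \<mu>0 \<rho> \<pi> c xh \<sigma>1 s1 oR1 oE2 oR2)) \<and>
     (\<forall>s1. reach1 \<mu>0 \<rho> \<pi> \<sigma>1 s1 > 0 \<longrightarrow> (\<forall>E2 R2. feasible_rep oR1 R2 \<longrightarrow>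
        V2 \<mu>0 \<rho> \<pi> c xh \<sigma>1 s1 s1 E2 R2 \<le> V2 \<mu>0 \<rho> \<pi> c xh \<sigma>1 s1 s1 oE2 oR2)) \<and>
     (\<forall>s1 s2. natw \<mu>0 \<rho> \<pi> \<sigma>1 s1 (\<sigma>2 s1) s2 > 0 \<longrightarrow> (\<forall>r2. (r2 = None \<or> r2 = s2) \<longrightarrow>
        agent_u c xh s1 r2 \<sigma>1 (\<sigma>2 s1) \<le> agent_u c xh s1 s2 \<sigma>1 (\<sigma>2 s1))))"

definition P_payoff :: "real \<Rightarrow> real \<Rightarrow> real \<Rightarrow> real \<Rightarrow> bool \<Rightarrow> (bool option \<Rightarrow> bool) \<Rightarrow>
    (bool option \<Rightarrow> bool option \<Rightarrow> bool) \<Rightarrow> real" where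
  "P_payoff \<mu>0 \<rho> \<pi> k \<sigma>1 \<sigma>2 xh =
     (\<Sum>\<omega>1\<in>UNIV. \<Sum>\<omega>2\<in>UNIV. \<Sum>s1\<in>UNIV. \<Sum>s2\<in>UNIV.
        prior \<mu>0 \<rho> \<omega>1 \<omega>2 * obs \<pi> \<sigma>1 \<omega>1 s1 * obs \<pi> (\<sigma>2 s1) \<omega>2 s2 *
        (of_bool (xh s1 s2 = \<omega>2) - k * (of_bool \<sigma>1 + of_bool (\<sigma>2 s1))))"

definition optimal_IC :: "real \<Rightarrow> real \<Rightarrow> real \<Rightarrow> real \<Rightarrow> real \<Rightarrow> bool \<Rightarrow> (bool option \<Rightarrow> bool) \<Rightarrow>
    (bool option \<Rightarrow> bool option \<Rightarrow> bool) \<Rightarrow> bool" where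
  "optimal_IC \<mu>0 \<rho> \<pi> c k \<sigma>1 \<sigma>2 xh \<longleftrightarrow>
     IC \<mu>0 \<rho> \<pi> c \<sigma>1 \<sigma>2 xh \<and>
     (\<forall>\<sigma>1' \<sigma>2' xh'. IC \<mu>0 \<rho> \<pi> c \<sigma>1' \<sigma>2' xh' \<longrightarrow>
        P_payoff \<mu>0 \<rho> \<pi> k \<sigma>1' \<sigma>2' xh' \<le> P_payoff \<mu>0 \<rho> \<pi> k \<sigma>1 \<sigma>2 xh)"

end

theory Submission imports Defs begin

lemma UNIV_opt: "(UNIV :: bool option set) = {None, Some False, Some True}"
  by (auto simp: set_eq_iff)

lemma sum_opt: "(\<Sum>s\<in>(UNIV::bool option set). f s) = f None + f (Some False) + f (Some True)"
  by (simp add: UNIV_opt add.assoc)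

lemma sum_bool: "(\<Sum>s\<in>(UNIV::bool set). f s) = f False + f True"
  by (simp add: UNIV_bool add.commute)

definition mm :: "real \<Rightarrow> real \<Rightarrow> real" where "mm \<mu> \<rho> = \<rho>*\<mu> + (1-\<rho>)*(1-\<mu>)"

definition ag :: "real \<Rightarrow> real \<Rightarrow> real \<Rightarrow> (bool option \<Rightarrow> bool) \<Rightarrow> bool \<Rightarrow> real" where
 "ag p \<pi> c x e2 = (if e2 then p * of_bool (x (Some True)) + (1-p) * of_bool (x (Some False)) - c
   else (1-\<pi>)*of_bool (x None) + \<pi>*(p*of_bool (x (Some True)) + (1-p)*of_bool (x (Some False))))"

definition gv where
 "gv \<mu> \<rho> \<pi> c xh e1 s1 r1 e2 = (\<Sum>s2\<in>UNIV. natw \<mu> \<rho> \<pi> e1 s1 e2 s2 * agent_u c xh r1 s2 e1 e2)"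

lemma gv_FN: "gv \<mu> \<rho> \<pi> c xh False None r1 e2 = (1-\<pi>) * ag (mm \<mu> \<rho>) \<pi> c (xh r1) e2"
  unfolding gv_def ag_def natw_def prior_def obs_def agent_u_def mm_def
  by (cases e2; simp add: sum_opt sum_bool algebra_simps)
lemma gv_F1: "gv \<mu> \<rho> \<pi> c xh False (Some True) r1 e2 = \<pi>*\<mu> * ag \<rho> \<pi> c (xh r1) e2"
  unfolding gv_def ag_def natw_def prior_def obs_def agent_u_def
  by (cases e2; simp add: sum_opt sum_bool algebra_simps)
lemma gv_F0: "gv \<mu> \<rho> \<pi> c xh False (Some False) r1 e2 = \<pi>*(1-\<mu>) * ag (1-\<rho>) \<pi> c (xh r1) e2"
  unfolding gv_def ag_def natw_def prior_def obs_def agent_u_def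
  by (cases e2; simp add: sum_opt sum_bool algebra_simps)
lemma gv_TN: "gv \<mu> \<rho> \<pi> c xh True None r1 e2 = 0"
  unfolding gv_def ag_def natw_def prior_def obs_def agent_u_def
  by (cases e2; simp add: sum_opt sum_bool algebra_simps)
lemma gv_T1: "gv \<mu> \<rho> \<pi> c xh True (Some True) r1 e2 = \<mu> * (ag \<rho> \<pi> c (xh r1) e2 - c)"
  unfolding gv_def ag_def natw_def prior_def obs_def agent_u_def
  by (cases e2; simp add: sum_opt sum_bool algebra_simps)
lemma gv_T0: "gv \<mu> \<rho> \<pi> c xh True (Some False) r1 e2 = (1-\<mu>) * (ag (1-\<rho>) \<pi> c (xh r1) e2 - c)"
  unfolding gv_def ag_def natw_def prior_def obs_def agent_u_def
  by (cases e2; simp add: sum_opt sum_bool algebra_simps)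

lemmas gv_simps = gv_FN gv_F1 gv_F0 gv_TN gv_T1 gv_T0

lemma V2_ob: "V2 \<mu> \<rho> \<pi> c xh e1 s1 r1 E2 (\<lambda>e1 s1 r1 e2 s2. s2) = gv \<mu> \<rho> \<pi> c xh e1 s1 r1 (E2 e1 s1 r1)"
  unfolding V2_def gv_def by simp

lemma V0_sum: "V0 \<mu> \<rho> \<pi> c xh E1 R1 E2 R2 =
   V1 \<mu> \<rho> \<pi> c xh E1 None R1 E2 R2 + V1 \<mu> \<rho> \<pi> c xh E1 (Some False) R1 E2 R2 + V1 \<mu> \<rho> \<pi> c xh E1 (Some True) R1 E2 R2"
  unfolding V0_def by (simp add: sum_opt)

lemma prior_nonneg: "0 \<le> \<mu> \<Longrightarrow> \<mu> \<le> 1 \<Longrightarrow> 0 \<le> \<rho> \<Longrightarrow> \<rho> \<le> 1 \<Longrightarrow> 0 \<le> prior \<mu> \<rho> w1 w2"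
  unfolding prior_def by auto
lemma obs_nonneg: "0 \<le> \<pi> \<Longrightarrow> \<pi> \<le> 1 \<Longrightarrow> 0 \<le> obs \<pi> e w s"
  unfolding obs_def by auto
lemma natw_nonneg: "0 \<le> \<mu> \<Longrightarrow> \<mu> \<le> 1 \<Longrightarrow> 0 \<le> \<rho> \<Longrightarrow> \<rho> \<le> 1 \<Longrightarrow> 0 \<le> \<pi> \<Longrightarrow> \<pi> \<le> 1 \<Longrightarrow>
   0 \<le> natw \<mu> \<rho> \<pi> e1 s1 e2 s2"
  unfolding natw_def by (intro sum_nonneg mult_nonneg_nonneg prior_nonneg obs_nonneg) auto

lemma V2_le:
  assumes "0 \<le> \<mu>" "\<mu> \<le> 1" "0 \<le> \<rho>" "\<rho> \<le> 1" "0 \<le> \<pi>" "\<pi> \<le> 1"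
    and mono: "\<And>r1 s2. xh r1 None \<Longrightarrow> xh r1 s2"
    and feas: "\<And>e1 s1 r1 e2 s2. R2 e1 s1 r1 e2 s2 = None \<or> R2 e1 s1 r1 e2 s2 = s2"
  shows "V2 \<mu> \<rho> \<pi> c xh e1 s1 r1 E2 R2 \<le> gv \<mu> \<rho> \<pi> c xh e1 s1 r1 (E2 e1 s1 r1)"
  unfolding V2_def gv_def
proof (rule sum_mono)
  fix s2
  have "agent_u c xh r1 (R2 e1 s1 r1 (E2 e1 s1 r1) s2) e1 (E2 e1 s1 r1) \<le> agent_u c xh r1 s2 e1 (E2 e1 s1 r1)"
    using feas[of e1 s1 r1 "E2 e1 s1 r1" s2] mono[of r1 s2] unfolding agent_u_def by auto
  then show "natw \<mu> \<rho> \<pi> e1 s1 (E2 e1 s1 r1) s2 * agent_u c xh r1 (R2 e1 s1 r1 (E2 e1 s1 r1) s2) e1 (E2 e1 s1 r1)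
      \<le> natw \<mu> \<rho> \<pi> e1 s1 (E2 e1 s1 r1) s2 * agent_u c xh r1 s2 e1 (E2 e1 s1 r1)"
    by (rule mult_left_mono[OF _ natw_nonneg]) (use assms in auto)
qed

lemma IC_D: assumes "IC \<mu> \<rho> \<pi> c \<sigma>1 \<sigma>2 xh"
  shows "(\<forall>r1. \<sigma>2 r1 \<longrightarrow> \<not> xh r1 None) \<and>
     (\<forall>E1 R1 E2 R2. feasible_rep R1 R2 \<longrightarrow>
        V0 \<mu> \<rho> \<pi> c xh E1 R1 E2 R2 \<le> V0 \<mu> \<rho> \<pi> c xh \<sigma>1 (\<lambda>e s. s) (\<lambda>e s r. \<sigma>2 r) (\<lambda>e1 s1 r1 e2 s2. s2)) \<and>
     (\<forall>s1. reach1 \<mu> \<rho> \<pi> \<sigma>1 s1 > 0 \<longrightarrow> (\<forall>R1 E2 R2. feasible_rep R1 R2 \<longrightarrow>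
        V1 \<mu> \<rho> \<pi> c xh \<sigma>1 s1 R1 E2 R2 \<le> V1 \<mu> \<rho> \<pi> c xh \<sigma>1 s1 (\<lambda>e s. s) (\<lambda>e s r. \<sigma>2 r) (\<lambda>e1 s1 r1 e2 s2. s2))) \<and>
     (\<forall>s1. reach1 \<mu> \<rho> \<pi> \<sigma>1 s1 > 0 \<longrightarrow> (\<forall>E2 R2. feasible_rep (\<lambda>e s. s) R2 \<longrightarrow>
        V2 \<mu> \<rho> \<pi> c xh \<sigma>1 s1 s1 E2 R2 \<le> V2 \<mu> \<rho> \<pi> c xh \<sigma>1 s1 s1 (\<lambda>e s r. \<sigma>2 r) (\<lambda>e1 s1 r1 e2 s2. s2))) \<and>
     (\<forall>s1 s2. natw \<mu> \<rho> \<pi> \<sigma>1 s1 (\<sigma>2 s1) s2 > 0 \<longrightarrow> (\<forall>r2. (r2 = None \<or> r2 = s2) \<longrightarrow>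
        agent_u c xh s1 r2 \<sigma>1 (\<sigma>2 s1) \<le> agent_u c xh s1 s2 \<sigma>1 (\<sigma>2 s1)))"
  using assms unfolding IC_def Let_def by assumption

lemma IC_c1: assumes "IC \<mu> \<rho> \<pi> c \<sigma>1 \<sigma>2 xh" "\<sigma>2 r1" shows "\<not> xh r1 None"
  using conjunct1[OF IC_D[OF assms(1)]] assms(2) by blast
lemma IC_c2: assumes "IC \<mu> \<rho> \<pi> c \<sigma>1 \<sigma>2 xh" "feasible_rep R1 R2" shows
   "V0 \<mu> \<rho> \<pi> c xh E1 R1 E2 R2 \<le> V0 \<mu> \<rho> \<pi> c xh \<sigma>1 (\<lambda>e s. s) (\<lambda>e s r. \<sigma>2 r) (\<lambda>e1 s1 r1 e2 s2. s2)"
  by (rule conjunct1[OF conjunct2[OF IC_D[OF assms(1)]], rule_format, OF assms(2)])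
lemma IC_c3: assumes "IC \<mu> \<rho> \<pi> c \<sigma>1 \<sigma>2 xh" "reach1 \<mu> \<rho> \<pi> \<sigma>1 s1 > 0" "feasible_rep R1 R2" shows
   "V1 \<mu> \<rho> \<pi> c xh \<sigma>1 s1 R1 E2 R2 \<le> V1 \<mu> \<rho> \<pi> c xh \<sigma>1 s1 (\<lambda>e s. s) (\<lambda>e s r. \<sigma>2 r) (\<lambda>e1 s1 r1 e2 s2. s2)"
  by (rule conjunct1[OF conjunct2[OF conjunct2[OF IC_D[OF assms(1)]]], rule_format, OF assms(2) assms(3)])
lemma IC_c4: assumes "IC \<mu> \<rho> \<pi> c \<sigma>1 \<sigma>2 xh" "reach1 \<mu> \<rho> \<pi> \<sigma>1 s1 > 0" "feasible_rep (\<lambda>e s. s) R2" shows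
   "V2 \<mu> \<rho> \<pi> c xh \<sigma>1 s1 s1 E2 R2 \<le> V2 \<mu> \<rho> \<pi> c xh \<sigma>1 s1 s1 (\<lambda>e s r. \<sigma>2 r) (\<lambda>e1 s1 r1 e2 s2. s2)"
  by (rule conjunct1[OF conjunct2[OF conjunct2[OF conjunct2[OF IC_D[OF assms(1)]]]], rule_format, OF assms(2) assms(3)])
lemma IC_c5: assumes "IC \<mu> \<rho> \<pi> c \<sigma>1 \<sigma>2 xh" "natw \<mu> \<rho> \<pi> \<sigma>1 s1 (\<sigma>2 s1) s2 > 0" "xh s1 None" shows "xh s1 s2"
proof -
  have "agent_u c xh s1 None \<sigma>1 (\<sigma>2 s1) \<le> agent_u c xh s1 s2 \<sigma>1 (\<sigma>2 s1)"
    by (rule conjunct2[OF conjunct2[OF conjunct2[OF conjunct2[OF IC_D[OF assms(1)]]]], rule_format, OF assms(2)]) simp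
  then show "xh s1 s2" using assms(3) unfolding agent_u_def by (cases "xh s1 s2") auto
qed


definition u :: "real \<Rightarrow> real \<Rightarrow> real \<Rightarrow> bool \<Rightarrow> (bool option \<Rightarrow> bool) \<Rightarrow> real" where
 "u p \<pi> k t x = (if t then p * of_bool (x (Some True)) + (1-p) * of_bool (\<not> x (Some False)) - k
   else (1-\<pi>)*(p*of_bool (x None) + (1-p)*of_bool (\<not> x None)) + \<pi>*(p*of_bool (x (Some True)) + (1-p)*of_bool (\<not> x (Some False))))"

lemma P_F: "P_payoff \<mu> \<rho> \<pi> k False \<sigma>2 xh =
   (1-\<pi>) * u (mm \<mu> \<rho>) \<pi> k (\<sigma>2 None) (xh None)
   + \<pi>*\<mu> * u \<rho> \<pi> k (\<sigma>2 (Some True)) (xh (Some True))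
   + \<pi>*(1-\<mu>) * u (1-\<rho>) \<pi> k (\<sigma>2 (Some False)) (xh (Some False))"
  unfolding P_payoff_def u_def prior_def obs_def mm_def
  by (cases "\<sigma>2 None"; cases "\<sigma>2 (Some True)"; cases "\<sigma>2 (Some False)"; simp add: sum_opt sum_bool of_bool_not_iff algebra_simps)

lemma P_T: "P_payoff \<mu> \<rho> \<pi> k True \<sigma>2 xh =
   \<mu> * (u \<rho> \<pi> k (\<sigma>2 (Some True)) (xh (Some True)) - k)
   + (1-\<mu>) * (u (1-\<rho>) \<pi> k (\<sigma>2 (Some False)) (xh (Some False)) - k)"
  unfolding P_payoff_def u_def prior_def obs_def
  by (cases "\<sigma>2 None"; cases "\<sigma>2 (Some True)"; cases "\<sigma>2 (Some False)"; simp add: sum_opt sum_bool of_bool_not_iff algebra_simps)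

lemma reach_vals: "reach1 \<mu> \<rho> \<pi> False None = 1 - \<pi>" "reach1 \<mu> \<rho> \<pi> False (Some True) = \<pi>*\<mu>"
  "reach1 \<mu> \<rho> \<pi> False (Some False) = \<pi>*(1-\<mu>)"
  "reach1 \<mu> \<rho> \<pi> True (Some True) = \<mu>" "reach1 \<mu> \<rho> \<pi> True (Some False) = 1-\<mu>"
  unfolding reach1_def prior_def obs_def by (simp_all add: sum_opt sum_bool algebra_simps)

lemma natw_vals:
  "natw \<mu> \<rho> \<pi> False None False (Some True) = (1-\<pi>)*\<pi>*mm \<mu> \<rho>"
  "natw \<mu> \<rho> \<pi> False None False (Some False) = (1-\<pi>)*\<pi>*(1-mm \<mu> \<rho>)"
  "natw \<mu> \<rho> \<pi> False (Some True) False (Some False) = \<pi>*\<mu>*(1-\<rho>)*\<pi>"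
  "natw \<mu> \<rho> \<pi> False (Some True) False (Some True) = \<pi>*\<mu>*\<rho>*\<pi>"
  "natw \<mu> \<rho> \<pi> True (Some True) False (Some False) = \<mu>*(1-\<rho>)*\<pi>"
  "natw \<mu> \<rho> \<pi> True (Some True) False (Some True) = \<mu>*\<rho>*\<pi>"
  unfolding natw_def prior_def obs_def mm_def by (simp_all add: sum_opt sum_bool algebra_simps)

lemma ag_xd: "ag p \<pi> c (\<lambda>r2. r2 = Some True) e = (if e then p - c else \<pi>*p)"
  by (simp add: ag_def)
lemma ag_x1: "ag p \<pi> c (\<lambda>r2. True) e = (if e then 1 - c else 1)"
  by (simp add: ag_def)

lemma u_le_1k:
  assumes "0\<le>p" "p\<le>1" "0\<le>\<pi>" "\<pi>\<le>1" "k \<le> (1-\<pi>)*p" "k \<le> (1-\<pi>)*(1-p)"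
  shows "u p \<pi> k t x \<le> 1 - k"
proof -
  have F: "0 \<le> \<pi>*p" "\<pi>*p \<le> \<pi>" "\<pi>*p \<le> p" using assms
    by (auto simp: mult_left_le mult_left_le_one_le)
  have A: "k \<le> p - \<pi>*p" "k \<le> 1 - p - \<pi> + \<pi>*p" using assms(5,6) by (simp_all add: algebra_simps)
  show ?thesis unfolding u_def
    by (cases t; cases "x None"; cases "x (Some True)"; cases "x (Some False)"; simp add: algebra_simps; use F A assms(1-4) in linarith)
qed

lemma u_le_X:
  assumes "0\<le>p" "p\<le>1/2" "0\<le>\<pi>" "\<pi>\<le>1" "(1-\<pi>)*p \<le> k"
  shows "u p \<pi> k t x \<le> \<pi> + (1-\<pi>)*(1-p)"
proof -
  have h: "\<pi>*(2*p) \<le> \<pi>*1" by (rule mult_left_mono) (use assms in auto)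
  have h2: "2*(\<pi>*p) \<le> \<pi>" using h by (metis mult.left_commute mult_1_right)
  have h3: "\<pi>*(1-2*p) \<le> 1*(1-2*p)" by (rule mult_right_mono) (use assms in auto)
  have h4: "\<pi> - 2*(\<pi>*p) \<le> 1 - 2*p" using h3 by (simp add: algebra_simps)
  have F: "0 \<le> \<pi>*p" "\<pi>*p \<le> \<pi>" "\<pi>*p \<le> p" "2*(\<pi>*p) \<le> \<pi>" "\<pi> - 2*(\<pi>*p) \<le> 1 - 2*p" using assms h2 h4
    by (auto simp: mult_left_le mult_left_le_one_le)
  have A: "p - \<pi>*p \<le> k" using assms(5) by (simp add: algebra_simps)
  show ?thesis unfolding u_def
    by (cases t; cases "x None"; cases "x (Some True)"; cases "x (Some False)"; simp add: algebra_simps; use F A assms(1-4) in linarith)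
qed

lemma u_le_S1:
  assumes "1/2\<le>p" "p\<le>1" "0\<le>\<pi>" "\<pi>\<le>1" "k \<le> p"
    and "\<not> t \<Longrightarrow> \<not> x None \<Longrightarrow> \<not> x (Some True)"
    and "\<not> t \<Longrightarrow> x None \<Longrightarrow> x (Some False)"
  shows "u p \<pi> k t x \<le> (if \<not> t \<and> x None then p else 1 - k)"
proof -
  have "\<pi>*1 \<le> \<pi>*(2*p)" by (rule mult_left_mono) (use assms in auto)
  then have F: "0 \<le> \<pi>*p" "\<pi>*p \<le> \<pi>" "\<pi>*p \<le> p" "\<pi> \<le> 2*(\<pi>*p)" using assms
    by (auto simp: mult_left_le mult_left_le_one_le)
  show ?thesis using assms(6,7) unfolding u_def
    by (cases t; cases "x None"; cases "x (Some True)"; cases "x (Some False)"; simp add: algebra_simps; use F assms(1-5) in linarith)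
qed

lemma u_le_sub:
  assumes "1/2\<le>p" "p\<le>1" "0\<le>\<pi>" "\<pi>\<le>1" "0 \<le> k"
    and "\<not> t \<Longrightarrow> x None \<Longrightarrow> x (Some False)"
    and "\<not> (x (Some True) \<and> \<not> x (Some False) \<and> (t \<or> \<not> x None))"
  shows "u p \<pi> k t x \<le> p"
proof -
  have h: "\<pi>*(2*p-1) \<le> 1*(2*p-1)" by (rule mult_right_mono) (use assms in auto)
  have h2: "2*(\<pi>*p) - \<pi> \<le> 2*p - 1" using h by (simp add: algebra_simps)
  have F: "0 \<le> \<pi>*p" "\<pi>*p \<le> \<pi>" "\<pi>*p \<le> p" "2*(\<pi>*p) - \<pi> \<le> 2*p - 1" using assms h2
    by (auto simp: mult_left_le mult_left_le_one_le)
  show ?thesis using assms(6,7) unfolding u_def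
    by (cases t; cases "x None"; cases "x (Some True)"; cases "x (Some False)"; simp add: algebra_simps; use F assms(1-5) in linarith)
qed


lemma V1_le:
  assumes "0 \<le> \<mu>" "\<mu> \<le> 1" "0 \<le> \<rho>" "\<rho> \<le> 1" "0 \<le> \<pi>" "\<pi> \<le> 1"
    and mono: "\<And>r1 s2. xh r1 None \<Longrightarrow> xh r1 s2"
    and f: "feasible_rep R1 R2"
  shows "V1 \<mu> \<rho> \<pi> c xh e1 s1 R1 E2 R2 \<le> gv \<mu> \<rho> \<pi> c xh e1 s1 (R1 e1 s1) (E2 e1 s1 (R1 e1 s1))"
  unfolding V1_def by (rule V2_le) (use assms in \<open>auto simp: feasible_rep_def\<close>)

lemma IC_intro:
  assumes par: "0 \<le> \<mu>" "\<mu> \<le> 1" "0 \<le> \<rho>" "\<rho> \<le> 1" "0 \<le> \<pi>" "\<pi> \<le> 1"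
    and h1: "\<And>r1. \<sigma>2 r1 \<Longrightarrow> \<not> xh r1 None"
    and mono: "\<And>r1 s2. xh r1 None \<Longrightarrow> xh r1 s2"
    and hb: "\<And>s1 r e. r = None \<or> r = s1 \<Longrightarrow> gv \<mu> \<rho> \<pi> c xh False s1 r e \<le> gv \<mu> \<rho> \<pi> c xh False s1 s1 (\<sigma>2 s1)"
    and ht: "\<And>r0 e0 r1 e1. r0 = None \<or> r0 = Some False \<Longrightarrow> r1 = None \<or> r1 = Some True \<Longrightarrow>
        gv \<mu> \<rho> \<pi> c xh True (Some False) r0 e0 + gv \<mu> \<rho> \<pi> c xh True (Some True) r1 e1
        \<le> gv \<mu> \<rho> \<pi> c xh False None None (\<sigma>2 None) + gv \<mu> \<rho> \<pi> c xh False (Some False) (Some False) (\<sigma>2 (Some False))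
          + gv \<mu> \<rho> \<pi> c xh False (Some True) (Some True) (\<sigma>2 (Some True))"
  shows "IC \<mu> \<rho> \<pi> c False \<sigma>2 xh"
proof -
  have ob: "\<And>s1. V1 \<mu> \<rho> \<pi> c xh False s1 (\<lambda>e s. s) (\<lambda>e s r. \<sigma>2 r) (\<lambda>e1 s1 r1 e2 s2. s2) = gv \<mu> \<rho> \<pi> c xh False s1 s1 (\<sigma>2 s1)"
    by (simp add: V1_def V2_ob)
  have ob2: "\<And>s1. V2 \<mu> \<rho> \<pi> c xh False s1 s1 (\<lambda>e s r. \<sigma>2 r) (\<lambda>e1 s1 r1 e2 s2. s2) = gv \<mu> \<rho> \<pi> c xh False s1 s1 (\<sigma>2 s1)"
    by (simp add: V2_ob)
  have R1o: "\<And>R1 R2 e s. feasible_rep R1 R2 \<Longrightarrow> R1 e s = None \<or> R1 e s = s"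
    by (simp add: feasible_rep_def)
  have V1b: "\<And>e1 s1 R1 E2 R2. feasible_rep R1 R2 \<Longrightarrow> V1 \<mu> \<rho> \<pi> c xh e1 s1 R1 E2 R2 \<le> gv \<mu> \<rho> \<pi> c xh e1 s1 (R1 e1 s1) (E2 e1 s1 (R1 e1 s1))"
    by (rule V1_le) (use par mono in auto)
  have c2: "V0 \<mu> \<rho> \<pi> c xh E1 R1 E2 R2 \<le> V0 \<mu> \<rho> \<pi> c xh False (\<lambda>e s. s) (\<lambda>e s r. \<sigma>2 r) (\<lambda>e1 s1 r1 e2 s2. s2)"
    if f: "feasible_rep R1 R2" for E1 R1 E2 R2
  proof (cases E1)
    case True
    have "V1 \<mu> \<rho> \<pi> c xh True None R1 E2 R2 \<le> 0" using V1b[OF f, of True None E2] by (simp add: gv_TN)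
    moreover have "V1 \<mu> \<rho> \<pi> c xh True (Some False) R1 E2 R2 + V1 \<mu> \<rho> \<pi> c xh True (Some True) R1 E2 R2
       \<le> gv \<mu> \<rho> \<pi> c xh True (Some False) (R1 True (Some False)) (E2 True (Some False) (R1 True (Some False)))
        + gv \<mu> \<rho> \<pi> c xh True (Some True) (R1 True (Some True)) (E2 True (Some True) (R1 True (Some True)))"
      using V1b[OF f, of True "Some False" E2] V1b[OF f, of True "Some True" E2] by linarith
    moreover have "\<dots> \<le> gv \<mu> \<rho> \<pi> c xh False None None (\<sigma>2 None) + gv \<mu> \<rho> \<pi> c xh False (Some False) (Some False) (\<sigma>2 (Some False))
          + gv \<mu> \<rho> \<pi> c xh False (Some True) (Some True) (\<sigma>2 (Some True))"
      by (rule ht) (use R1o[OF f] in auto)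
    ultimately show ?thesis using True by (simp add: V0_sum ob)
  next
    case False
    have "V1 \<mu> \<rho> \<pi> c xh False s R1 E2 R2 \<le> gv \<mu> \<rho> \<pi> c xh False s s (\<sigma>2 s)" for s
      by (rule order_trans[OF V1b[OF f, of False s E2] hb[OF R1o[OF f, of False s]]])
    then show ?thesis using False by (simp add: V0_sum ob add_mono)
  qed
  show ?thesis unfolding IC_def Let_def
  proof (intro conjI allI impI)
    show "\<And>r1. \<sigma>2 r1 \<Longrightarrow> \<not> xh r1 None" by (rule h1)
    show "\<And>E1 R1 E2 R2. feasible_rep R1 R2 \<Longrightarrow> V0 \<mu> \<rho> \<pi> c xh E1 R1 E2 R2 \<le> V0 \<mu> \<rho> \<pi> c xh False (\<lambda>e s. s) (\<lambda>e s r. \<sigma>2 r) (\<lambda>e1 s1 r1 e2 s2. s2)"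
      by (rule c2)
    show "V1 \<mu> \<rho> \<pi> c xh False s1 R1 E2 R2 \<le> V1 \<mu> \<rho> \<pi> c xh False s1 (\<lambda>e s. s) (\<lambda>e s r. \<sigma>2 r) (\<lambda>e1 s1 r1 e2 s2. s2)"
      if "feasible_rep R1 R2" for s1 R1 E2 R2
      unfolding ob by (rule order_trans[OF V1b[OF that, of False s1 E2] hb[OF R1o[OF that, of False s1]]])
    show "V2 \<mu> \<rho> \<pi> c xh False s1 s1 E2 R2 \<le> V2 \<mu> \<rho> \<pi> c xh False s1 s1 (\<lambda>e s r. \<sigma>2 r) (\<lambda>e1 s1 r1 e2 s2. s2)"
      if "feasible_rep (\<lambda>e s. s) R2" for s1 E2 R2
    proof -
      have "V2 \<mu> \<rho> \<pi> c xh False s1 s1 E2 R2 \<le> gv \<mu> \<rho> \<pi> c xh False s1 s1 (E2 False s1 s1)"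
        by (rule V2_le) (use par mono that in \<open>auto simp: feasible_rep_def\<close>)
      also have "\<dots> \<le> gv \<mu> \<rho> \<pi> c xh False s1 s1 (\<sigma>2 s1)" by (rule hb) simp
      finally show ?thesis by (simp add: ob2)
    qed
    show "agent_u c xh s1 r2 False (\<sigma>2 s1) \<le> agent_u c xh s1 s2 False (\<sigma>2 s1)"
      if "r2 = None \<or> r2 = s2" for s1 s2 r2
      using that mono[of s1 s2] by (auto simp: agent_u_def)
  qed
qed


lemma ag_le1: "0 \<le> p \<Longrightarrow> p \<le> 1 \<Longrightarrow> 0 \<le> \<pi> \<Longrightarrow> \<pi> \<le> 1 \<Longrightarrow> 0 \<le> c \<Longrightarrow> ag p \<pi> c x e \<le> 1"
proof -
  assume a: "0 \<le> p" "p \<le> 1" "0 \<le> \<pi>" "\<pi> \<le> 1" "0 \<le> c"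
  have F: "0 \<le> \<pi>*p" "\<pi>*p \<le> \<pi>" "\<pi>*p \<le> p" using a
    by (auto simp: mult_left_le mult_left_le_one_le)
  show ?thesis unfolding ag_def
    by (cases e; cases "x None"; cases "x (Some True)"; cases "x (Some False)"; simp add: algebra_simps; use F a in linarith)
qed

context
  fixes \<mu> \<rho> \<pi> c k :: real
  assumes mu0: "0 < \<mu>" and mu1: "\<mu> < 1" and rho0: "1/2 < \<rho>" and rho1: "\<rho> < 1"
    and pi0: "0 < \<pi>" and pi1: "\<pi> < 1" and cpos: "0 < c" and kpos: "0 < k"
    and k1: "(1-\<rho>)*(1-\<pi>) < k" and k2: "k \<le> (1-\<pi>)*mm \<mu> \<rho>" and k3: "k \<le> (1-\<pi>)*(1 - mm \<mu> \<rho>)"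
    and c1: "(1-\<rho>)*(1-\<pi>) < c" and c2: "c \<le> (1-\<pi>)*mm \<mu> \<rho>"
begin

lemma par: "0 \<le> \<mu>" "\<mu> \<le> 1" "0 \<le> \<rho>" "\<rho> \<le> 1" "0 \<le> \<pi>" "\<pi> \<le> 1"
  using mu0 mu1 rho0 rho1 pi0 pi1 by auto

lemma mfacts: "0 < mm \<mu> \<rho>" "mm \<mu> \<rho> < \<rho>" "1 - mm \<mu> \<rho> < \<rho>" "mm \<mu> \<rho> < 1"
proof -
  have e1: "\<rho> - mm \<mu> \<rho> = (1-\<mu>)*(2*\<rho>-1)" by (simp add: mm_def algebra_simps)
  have e2: "\<rho> - (1 - mm \<mu> \<rho>) = \<mu>*(2*\<rho>-1)" by (simp add: mm_def algebra_simps)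
  have p1: "0 < (1-\<mu>)*(2*\<rho>-1)" "0 < \<mu>*(2*\<rho>-1)" using mu0 mu1 rho0 by auto
  have p2: "0 < \<rho>*\<mu>" "0 \<le> (1-\<rho>)*(1-\<mu>)" using mu0 mu1 rho0 rho1 by auto
  show "0 < mm \<mu> \<rho>" using p2 by (simp add: mm_def)
  show "mm \<mu> \<rho> < \<rho>" using e1 p1 by linarith
  show "1 - mm \<mu> \<rho> < \<rho>" using e2 p1 by linarith
  show "mm \<mu> \<rho> < 1" using e1 p1 rho1 by linarith
qed

lemma cl: "c < (1-\<pi>)*\<rho>"
proof -
  have "(1-\<pi>)*mm \<mu> \<rho> < (1-\<pi>)*\<rho>" using mfacts(2) pi1 by simp
  then show ?thesis using c2 by linarith
qed

lemma kl: "k \<le> \<rho>"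
proof -
  have "(1-\<pi>)*(1 - mm \<mu> \<rho>) \<le> 1 - mm \<mu> \<rho>" using mfacts pi0 pi1 by (simp add: mult_left_le_one_le)
  then show ?thesis using k3 mfacts(3) by linarith
qed

lemma reach_pos: "reach1 \<mu> \<rho> \<pi> \<sigma>1 (Some True) > 0" "reach1 \<mu> \<rho> \<pi> \<sigma>1 (Some False) > 0"
  "reach1 \<mu> \<rho> \<pi> False None > 0"
  using mu0 mu1 pi0 pi1 by (cases \<sigma>1; simp add: reach_vals)+

lemma feas_ob: "feasible_rep (\<lambda>e s. s) (\<lambda>e1 s1 r1 e2 s2. s2)" "feasible_rep (\<lambda>e s. None) (\<lambda>e1 s1 r1 e2 s2. s2)"
  by (simp_all add: feasible_rep_def)

lemma K1:
  assumes IC: "IC \<mu> \<rho> \<pi> c \<sigma>1 \<sigma>2 xh" and n2: "\<not> \<sigma>2 (Some True)" and n0: "\<not> xh (Some True) None"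
  shows "\<not> xh (Some True) (Some True)"
proof
  assume x11: "xh (Some True) (Some True)"
  have "V2 \<mu> \<rho> \<pi> c xh \<sigma>1 (Some True) (Some True) (\<lambda>e s r. True) (\<lambda>e1 s1 r1 e2 s2. s2)
      \<le> V2 \<mu> \<rho> \<pi> c xh \<sigma>1 (Some True) (Some True) (\<lambda>e s r. \<sigma>2 r) (\<lambda>e1 s1 r1 e2 s2. s2)"
    by (rule IC_c4[OF IC reach_pos(1) feas_ob(1)])
  hence g: "gv \<mu> \<rho> \<pi> c xh \<sigma>1 (Some True) (Some True) True \<le> gv \<mu> \<rho> \<pi> c xh \<sigma>1 (Some True) (Some True) False"
    by (simp add: V2_ob n2)
  have a: "ag \<rho> \<pi> c (xh (Some True)) True \<le> ag \<rho> \<pi> c (xh (Some True)) False"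
  proof (cases \<sigma>1)
    case True
    with g have "\<mu> * (ag \<rho> \<pi> c (xh (Some True)) True - c) \<le> \<mu> * (ag \<rho> \<pi> c (xh (Some True)) False - c)"
      by (simp add: gv_T1)
    then show ?thesis using mu0 by (simp add: mult_le_cancel_left_pos)
  next
    case False
    with g have "(\<pi>*\<mu>) * ag \<rho> \<pi> c (xh (Some True)) True \<le> (\<pi>*\<mu>) * ag \<rho> \<pi> c (xh (Some True)) False"
      by (simp add: gv_F1)
    moreover have "0 < \<pi>*\<mu>" using pi0 mu0 by simp
    ultimately show ?thesis by (simp only: mult_le_cancel_left_pos)
  qed
  have F: "0 \<le> 1 - \<pi> - \<rho> + \<pi>*\<rho>"
  proof -
    have "0 \<le> (1-\<pi>)*(1-\<rho>)" using pi1 rho1 by simp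
    then show ?thesis by (simp add: algebra_simps)
  qed
  have cl': "c < \<rho> - \<pi>*\<rho>" using cl by (simp add: algebra_simps)
  show False using a x11 n0 unfolding ag_def
    by (cases "xh (Some True) (Some False)"; simp add: algebra_simps; use F cl' in linarith)
qed

lemma K2:
  assumes IC: "IC \<mu> \<rho> \<pi> c \<sigma>1 \<sigma>2 xh" and n2: "\<not> \<sigma>2 (Some True)" and x: "xh (Some True) None"
  shows "xh (Some True) (Some False)" "xh (Some True) (Some True)"
proof -
  have "natw \<mu> \<rho> \<pi> \<sigma>1 (Some True) (\<sigma>2 (Some True)) (Some False) > 0"
       "natw \<mu> \<rho> \<pi> \<sigma>1 (Some True) (\<sigma>2 (Some True)) (Some True) > 0"
    using n2 mu0 pi0 rho0 rho1 by (cases \<sigma>1; simp add: natw_vals)+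
  then show "xh (Some True) (Some False)" "xh (Some True) (Some True)"
    using IC_c5[OF IC _ x] by blast+
qed

lemma K3:
  assumes IC: "IC \<mu> \<rho> \<pi> c False \<sigma>2 xh" and n2: "\<not> \<sigma>2 None" and x: "xh None None"
  shows "xh None (Some False)" "xh None (Some True)"
proof -
  have "natw \<mu> \<rho> \<pi> False None (\<sigma>2 None) (Some False) > 0"
       "natw \<mu> \<rho> \<pi> False None (\<sigma>2 None) (Some True) > 0"
    using n2 mfacts pi0 pi1 by (simp_all add: natw_vals)
  then show "xh None (Some False)" "xh None (Some True)"
    using IC_c5[OF IC _ x] by blast+
qed

lemma K4:
  assumes IC: "IC \<mu> \<rho> \<pi> c False \<sigma>2 xh" and n2: "\<not> \<sigma>2 None" and "\<not> xh None None"
    "xh None (Some True)" "\<not> xh None (Some False)"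
  shows "(1-\<pi>)*mm \<mu> \<rho> \<le> c"
proof -
  have "V2 \<mu> \<rho> \<pi> c xh False None None (\<lambda>e s r. True) (\<lambda>e1 s1 r1 e2 s2. s2)
      \<le> V2 \<mu> \<rho> \<pi> c xh False None None (\<lambda>e s r. \<sigma>2 r) (\<lambda>e1 s1 r1 e2 s2. s2)"
    by (rule IC_c4[OF IC reach_pos(3) feas_ob(1)])
  hence "(1-\<pi>) * (mm \<mu> \<rho> - c) \<le> (1-\<pi>) * (\<pi> * mm \<mu> \<rho>)"
    using assms by (simp add: V2_ob gv_FN ag_def)
  hence "mm \<mu> \<rho> - c \<le> \<pi> * mm \<mu> \<rho>" using pi1 by (simp only: mult_le_cancel_left_pos diff_gt_0_iff_gt)
  then show ?thesis by (simp add: algebra_simps)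
qed


lemma V1_ob: "V1 \<mu> \<rho> \<pi> c xh e1 s1 (\<lambda>e s. s) (\<lambda>e s r. \<sigma>2 r) (\<lambda>e1 s1 r1 e2 s2. s2) = gv \<mu> \<rho> \<pi> c xh e1 s1 s1 (\<sigma>2 s1)"
  by (simp add: V1_def V2_ob)

lemma K5:
  assumes IC: "IC \<mu> \<rho> \<pi> c False \<sigma>2 xh" and n2: "\<not> \<sigma>2 (Some True)"
    and x1: "xh (Some True) None" "xh (Some True) (Some False)" "xh (Some True) (Some True)"
    and x0: "\<not> xh None None" "xh None (Some True)" "\<not> xh None (Some False)"
    and alt: "\<sigma>2 None \<or> c = (1-\<pi>)*mm \<mu> \<rho>"
  shows "(1-\<pi>)*(1-\<rho>)*(\<mu>-(1-\<mu>)*(1-\<pi>)) \<le> \<pi>*c"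
proof -
  define A0 where "A0 = ag (1-\<rho>) \<pi> c (xh (Some False)) (\<sigma>2 (Some False))"
  have v0: "V0 \<mu> \<rho> \<pi> c xh True (\<lambda>e s. s) (\<lambda>e s r. \<sigma>2 r) (\<lambda>e1 s1 r1 e2 s2. s2)
      \<le> V0 \<mu> \<rho> \<pi> c xh False (\<lambda>e s. s) (\<lambda>e s r. \<sigma>2 r) (\<lambda>e1 s1 r1 e2 s2. s2)"
    by (rule IC_c2[OF IC feas_ob(1)])
  have gN: "gv \<mu> \<rho> \<pi> c xh False None None (\<sigma>2 None) = (1-\<pi>)*(mm \<mu> \<rho> - c)"
  proof (cases "\<sigma>2 None")
    case True then show ?thesis using x0 by (simp add: gv_FN ag_def)
  next
    case False
    then have cc: "c = (1-\<pi>)*mm \<mu> \<rho>" using alt by simp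
    have "gv \<mu> \<rho> \<pi> c xh False None None (\<sigma>2 None) = (1-\<pi>)*(\<pi>*mm \<mu> \<rho>)"
      using x0 False by (simp add: gv_FN ag_def)
    also have "\<dots> = (1-\<pi>)*(mm \<mu> \<rho> - c)" unfolding cc by (simp add: algebra_simps)
    finally show ?thesis .
  qed
  have g1T: "gv \<mu> \<rho> \<pi> c xh True (Some True) (Some True) (\<sigma>2 (Some True)) = \<mu>*(1-c)"
    using n2 x1 by (simp add: gv_T1 ag_def algebra_simps)
  have g1F: "gv \<mu> \<rho> \<pi> c xh False (Some True) (Some True) (\<sigma>2 (Some True)) = \<pi>*\<mu>"
    using n2 x1 by (simp add: gv_F1 ag_def algebra_simps)
  have I: "(1-\<mu>)*(A0 - c) + \<mu>*(1-c) \<le> (1-\<pi>)*(mm \<mu> \<rho> - c) + \<pi>*(1-\<mu>)*A0 + \<pi>*\<mu>"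
    using v0 unfolding V0_sum V1_ob by (simp add: gv_TN gv_T0 gN g1T g1F gv_F0 A0_def algebra_simps)
  have v1: "V1 \<mu> \<rho> \<pi> c xh False (Some False) (\<lambda>e s. None) (\<lambda>e s r. False) (\<lambda>e1 s1 r1 e2 s2. s2)
      \<le> V1 \<mu> \<rho> \<pi> c xh False (Some False) (\<lambda>e s. s) (\<lambda>e s r. \<sigma>2 r) (\<lambda>e1 s1 r1 e2 s2. s2)"
    by (rule IC_c3[OF IC reach_pos(2) feas_ob(2)])
  hence "(\<pi>*(1-\<mu>)) * (\<pi>*(1-\<rho>)) \<le> (\<pi>*(1-\<mu>)) * A0"
    unfolding V1_ob by (simp add: V1_def V2_ob gv_F0 ag_def x0 A0_def)
  moreover have "0 < \<pi>*(1-\<mu>)" using pi0 mu1 by simp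
  ultimately have II: "\<pi>*(1-\<rho>) \<le> A0" by (simp only: mult_le_cancel_left_pos)
  have III: "(1-\<pi>)*(1-\<mu>)*(\<pi>*(1-\<rho>)) \<le> (1-\<pi>)*(1-\<mu>)*A0"
    by (rule mult_left_mono[OF II]) (use pi1 mu1 in simp)
  have I': "(1-\<pi>)*(1-\<mu>)*A0 \<le> (1-\<pi>)*(mm \<mu> \<rho> - \<mu>) + \<pi>*c"
    using I by (simp add: algebra_simps)
  have eq: "(1-\<pi>)*(1-\<rho>)*(\<mu>-(1-\<mu>)*(1-\<pi>)) = (1-\<pi>)*(1-\<mu>)*(\<pi>*(1-\<rho>)) - (1-\<pi>)*(mm \<mu> \<rho> - \<mu>)"
    by (simp add: mm_def algebra_simps)
  show ?thesis using III I' eq by linarith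
qed

lemma bound_F:
  assumes IC: "IC \<mu> \<rho> \<pi> c False \<sigma>2 xh"
  shows "P_payoff \<mu> \<rho> \<pi> k False \<sigma>2 xh \<le> (1-\<pi>)*(1-k)
     + \<pi>*\<mu>*(if \<not> \<sigma>2 (Some True) \<and> xh (Some True) None then \<rho> else 1-k)
     + \<pi>*(1-\<mu>)*(\<pi> + (1-\<pi>)*\<rho>)"
proof -
  have uN: "u (mm \<mu> \<rho>) \<pi> k (\<sigma>2 None) (xh None) \<le> 1 - k"
    by (rule u_le_1k) (use mfacts par k2 k3 in auto)
  have u0: "u (1-\<rho>) \<pi> k (\<sigma>2 (Some False)) (xh (Some False)) \<le> \<pi> + (1-\<pi>)*\<rho>"
    using u_le_X[of "1-\<rho>" \<pi> k] rho0 rho1 pi0 pi1 k1 by (simp add: algebra_simps)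
  have u1: "u \<rho> \<pi> k (\<sigma>2 (Some True)) (xh (Some True)) \<le> (if \<not> \<sigma>2 (Some True) \<and> xh (Some True) None then \<rho> else 1-k)"
    by (rule u_le_S1) (use rho0 rho1 pi0 pi1 kl K1[OF IC] K2[OF IC] in auto)
  have "(1-\<pi>) * u (mm \<mu> \<rho>) \<pi> k (\<sigma>2 None) (xh None) \<le> (1-\<pi>)*(1-k)"
    by (rule mult_left_mono[OF uN]) (use pi1 in simp)
  moreover have "\<pi>*\<mu> * u \<rho> \<pi> k (\<sigma>2 (Some True)) (xh (Some True)) \<le> \<pi>*\<mu>*(if \<not> \<sigma>2 (Some True) \<and> xh (Some True) None then \<rho> else 1-k)"
    by (rule mult_left_mono[OF u1]) (use pi0 mu0 in simp)
  moreover have "\<pi>*(1-\<mu>) * u (1-\<rho>) \<pi> k (\<sigma>2 (Some False)) (xh (Some False)) \<le> \<pi>*(1-\<mu>)*(\<pi> + (1-\<pi>)*\<rho>)"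
    by (rule mult_left_mono[OF u0]) (use pi0 mu1 in simp)
  ultimately show ?thesis unfolding P_F by linarith
qed

lemma bound_T:
  assumes IC: "IC \<mu> \<rho> \<pi> c True \<sigma>2 xh"
  shows "P_payoff \<mu> \<rho> \<pi> k True \<sigma>2 xh \<le>
     \<mu>*((if \<not> \<sigma>2 (Some True) \<and> xh (Some True) None then \<rho> else 1-k) - k)
     + (1-\<mu>)*(\<pi> + (1-\<pi>)*\<rho> - k)"
proof -
  have u0: "u (1-\<rho>) \<pi> k (\<sigma>2 (Some False)) (xh (Some False)) \<le> \<pi> + (1-\<pi>)*\<rho>"
    using u_le_X[of "1-\<rho>" \<pi> k] rho0 rho1 pi0 pi1 k1 by (simp add: algebra_simps)
  have u1: "u \<rho> \<pi> k (\<sigma>2 (Some True)) (xh (Some True)) \<le> (if \<not> \<sigma>2 (Some True) \<and> xh (Some True) None then \<rho> else 1-k)"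
    by (rule u_le_S1) (use rho0 rho1 pi0 pi1 kl K1[OF IC] K2[OF IC] in auto)
  have "\<mu> * (u \<rho> \<pi> k (\<sigma>2 (Some True)) (xh (Some True)) - k) \<le> \<mu>*((if \<not> \<sigma>2 (Some True) \<and> xh (Some True) None then \<rho> else 1-k) - k)"
    by (rule mult_left_mono) (use u1 mu0 in auto)
  moreover have "(1-\<mu>) * (u (1-\<rho>) \<pi> k (\<sigma>2 (Some False)) (xh (Some False)) - k) \<le> (1-\<mu>)*(\<pi> + (1-\<pi>)*\<rho> - k)"
    by (rule mult_left_mono) (use u0 mu1 in auto)
  ultimately show ?thesis unfolding P_T by linarith
qed


lemma sub:
  assumes IC: "IC \<mu> \<rho> \<pi> c False \<sigma>2 xh" and n2: "\<not> \<sigma>2 (Some True)" and x: "xh (Some True) None"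
    and nGB: "\<pi>*c < (1-\<pi>)*(1-\<rho>)*(\<mu>-(1-\<mu>)*(1-\<pi>))"
  shows "P_payoff \<mu> \<rho> \<pi> k False \<sigma>2 xh \<le> (1-\<pi>)*mm \<mu> \<rho> + \<pi>*\<mu>*\<rho> + \<pi>*(1-\<mu>)*(\<pi> + (1-\<pi>)*\<rho>)"
proof -
  have a: "\<pi>*((1-\<rho>)*(1-\<pi>)) < \<pi>*c" by (rule mult_strict_left_mono[OF c1 pi0])
  have e: "\<pi>*((1-\<rho>)*(1-\<pi>)) = ((1-\<pi>)*(1-\<rho>))*\<pi>" by (simp add: mult_ac)
  have "((1-\<pi>)*(1-\<rho>))*\<pi> < ((1-\<pi>)*(1-\<rho>))*(\<mu>-(1-\<mu>)*(1-\<pi>))" using a e nGB by linarith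
  moreover have "0 < (1-\<pi>)*(1-\<rho>)" using pi1 rho1 by simp
  ultimately have "\<pi> < \<mu>-(1-\<mu>)*(1-\<pi>)" by (simp only: mult_less_cancel_left_pos)
  then have "1 + \<pi>*\<mu> < 2*\<mu>" by (simp add: algebra_simps)
  moreover have "0 \<le> \<pi>*\<mu>" using pi0 mu0 by simp
  ultimately have mu2: "1/2 \<le> \<mu>" by linarith
  have "0 \<le> (2*\<rho>-1)*(\<mu>-1/2)" using mu2 rho0 by simp
  moreover have "mm \<mu> \<rho> - 1/2 = (2*\<rho>-1)*(\<mu>-1/2)" by (simp add: mm_def algebra_simps)
  ultimately have mh: "1/2 \<le> mm \<mu> \<rho>" by linarith
  have x1: "xh (Some True) (Some False)" "xh (Some True) (Some True)" using K2[OF IC n2 x] by auto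
  have ns: "\<not> (xh None (Some True) \<and> \<not> xh None (Some False) \<and> (\<sigma>2 None \<or> \<not> xh None None))"
  proof
    assume H: "xh None (Some True) \<and> \<not> xh None (Some False) \<and> (\<sigma>2 None \<or> \<not> xh None None)"
    have nn: "\<not> xh None None" using H IC_c1[OF IC, of None] by blast
    have alt: "\<sigma>2 None \<or> c = (1-\<pi>)*mm \<mu> \<rho>"
    proof (cases "\<sigma>2 None")
      case False
      then have "(1-\<pi>)*mm \<mu> \<rho> \<le> c" using K4[OF IC False nn] H by blast
      then show ?thesis using c2 by linarith
    qed simp
    have "(1-\<pi>)*(1-\<rho>)*(\<mu>-(1-\<mu>)*(1-\<pi>)) \<le> \<pi>*c"
      by (rule K5[OF IC n2 x x1 nn _ _ alt]) (use H in auto)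
    then show False using nGB by linarith
  qed
  have uN: "u (mm \<mu> \<rho>) \<pi> k (\<sigma>2 None) (xh None) \<le> mm \<mu> \<rho>"
    by (rule u_le_sub) (use mh mfacts pi0 pi1 kpos K3[OF IC] ns in auto)
  have u0: "u (1-\<rho>) \<pi> k (\<sigma>2 (Some False)) (xh (Some False)) \<le> \<pi> + (1-\<pi>)*\<rho>"
    using u_le_X[of "1-\<rho>" \<pi> k] rho0 rho1 pi0 pi1 k1 by (simp add: algebra_simps)
  have u1: "u \<rho> \<pi> k (\<sigma>2 (Some True)) (xh (Some True)) \<le> \<rho>"
    using u_le_S1[of \<rho> \<pi> k "\<sigma>2 (Some True)" "xh (Some True)"] rho0 rho1 pi0 pi1 kl n2 x x1 by auto
  have "(1-\<pi>) * u (mm \<mu> \<rho>) \<pi> k (\<sigma>2 None) (xh None) \<le> (1-\<pi>)*mm \<mu> \<rho>"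
    by (rule mult_left_mono[OF uN]) (use pi1 in simp)
  moreover have "\<pi>*\<mu> * u \<rho> \<pi> k (\<sigma>2 (Some True)) (xh (Some True)) \<le> \<pi>*\<mu>*\<rho>"
    by (rule mult_left_mono[OF u1]) (use pi0 mu0 in simp)
  moreover have "\<pi>*(1-\<mu>) * u (1-\<rho>) \<pi> k (\<sigma>2 (Some False)) (xh (Some False)) \<le> \<pi>*(1-\<mu>)*(\<pi> + (1-\<pi>)*\<rho>)"
    by (rule mult_left_mono[OF u0]) (use pi0 mu1 in simp)
  ultimately show ?thesis unfolding P_F by linarith
qed

lemma X_le1: "\<pi> + (1-\<pi>)*\<rho> \<le> 1"
proof -
  have "(1-\<pi>)*\<rho> \<le> (1-\<pi>)*1" by (rule mult_left_mono) (use rho1 pi1 in auto)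
  then show ?thesis by simp
qed

lemma T_aux: assumes "M \<le> 1" shows "\<mu>*(M - k) + (1-\<mu>)*(\<pi> + (1-\<pi>)*\<rho> - k) \<le> (1-\<pi>)*(1-k) + \<pi>*\<mu>*M + \<pi>*(1-\<mu>)*(\<pi> + (1-\<pi>)*\<rho>)"
proof -
  let ?X = "\<pi> + (1-\<pi>)*\<rho>"
  have "\<mu>*M \<le> \<mu>*1" by (rule mult_left_mono) (use assms mu0 in auto)
  moreover have "(1-\<mu>)*?X \<le> (1-\<mu>)*1" by (rule mult_left_mono) (use X_le1 mu1 in auto)
  ultimately have s: "\<mu>*M + (1-\<mu>)*?X \<le> 1" by simp
  have z: "(1-\<pi>)*(\<mu>*M + (1-\<mu>)*?X) \<le> (1-\<pi>)*1" by (rule mult_left_mono[OF s]) (use pi1 in simp)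
  have eq: "(1-\<pi>)*(1-k) + \<pi>*\<mu>*M + \<pi>*(1-\<mu>)*?X - (\<mu>*(M - k) + (1-\<mu>)*(?X - k))
      = (1-\<pi>) + \<pi>*k - (1-\<pi>)*(\<mu>*M + (1-\<mu>)*?X)" by (simp add: algebra_simps)
  have pk: "0 \<le> \<pi>*k" using pi0 kpos by simp
  have L: "\<And>Z. Z \<le> (1-\<pi>)*1 \<Longrightarrow> 0 \<le> (1-\<pi>) + \<pi>*k - Z" using pk by simp
  have "0 \<le> (1-\<pi>) + \<pi>*k - (1-\<pi>)*(\<mu>*M + (1-\<mu>)*?X)" by (rule L[OF z])
  then have "0 \<le> (1-\<pi>)*(1-k) + \<pi>*\<mu>*M + \<pi>*(1-\<mu>)*?X - (\<mu>*(M - k) + (1-\<mu>)*(?X - k))"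
    by (simp only: eq)
  then show ?thesis by simp
qed

lemma FA:
  assumes kk: "1-\<rho> \<le> k" and IC: "IC \<mu> \<rho> \<pi> c \<sigma>1 \<sigma>2 xh"
  shows "P_payoff \<mu> \<rho> \<pi> k \<sigma>1 \<sigma>2 xh \<le> (1-\<pi>)*(1-k) + \<pi>*\<mu>*\<rho> + \<pi>*(1-\<mu>)*(\<pi> + (1-\<pi>)*\<rho>)"
proof (cases \<sigma>1)
  case True
  let ?M = "if \<not> \<sigma>2 (Some True) \<and> xh (Some True) None then \<rho> else 1-k"
  have M: "?M \<le> \<rho>" using kk by auto
  have "P_payoff \<mu> \<rho> \<pi> k \<sigma>1 \<sigma>2 xh \<le> \<mu>*(?M - k) + (1-\<mu>)*(\<pi> + (1-\<pi>)*\<rho> - k)"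
    using bound_T[of \<sigma>2 xh] IC True by simp
  also have "\<dots> \<le> \<mu>*(\<rho> - k) + (1-\<mu>)*(\<pi> + (1-\<pi>)*\<rho> - k)"
    using mult_left_mono[OF M, of \<mu>] mu0 by (simp add: algebra_simps)
  also have "\<dots> \<le> (1-\<pi>)*(1-k) + \<pi>*\<mu>*\<rho> + \<pi>*(1-\<mu>)*(\<pi> + (1-\<pi>)*\<rho>)"
    by (rule T_aux) (use rho1 in simp)
  finally show ?thesis .
next
  case False
  let ?M = "if \<not> \<sigma>2 (Some True) \<and> xh (Some True) None then \<rho> else 1-k"
  have M: "?M \<le> \<rho>" using kk by auto
  have "\<pi>*\<mu>*?M \<le> \<pi>*\<mu>*\<rho>" by (rule mult_left_mono[OF M]) (use pi0 mu0 in simp)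
  then show ?thesis using bound_F[of \<sigma>2 xh] IC False by simp
qed

lemma FB:
  assumes kk: "k \<le> 1-\<rho> \<or> \<pi>*c < (1-\<pi>)*(1-\<rho>)*(\<mu>-(1-\<mu>)*(1-\<pi>))" and IC: "IC \<mu> \<rho> \<pi> c \<sigma>1 \<sigma>2 xh"
  shows "P_payoff \<mu> \<rho> \<pi> k \<sigma>1 \<sigma>2 xh \<le> (1-\<pi>)*(1-k) + \<pi>*\<mu>*(1-k) + \<pi>*(1-\<mu>)*(\<pi> + (1-\<pi>)*\<rho>)"
proof (cases \<sigma>1)
  case True
  let ?M = "if \<not> \<sigma>2 (Some True) \<and> xh (Some True) None then \<rho> else 1-k"
  let ?X = "\<pi> + (1-\<pi>)*\<rho>"
  have P: "P_payoff \<mu> \<rho> \<pi> k \<sigma>1 \<sigma>2 xh \<le> \<mu>*(?M - k) + (1-\<mu>)*(?X - k)"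
    using bound_T[of \<sigma>2 xh] IC True by simp
  show ?thesis
  proof (cases "k \<le> 1-\<rho>")
    case True
    have M: "?M \<le> 1-k" using True by auto
    have "\<mu>*(?M - k) + (1-\<mu>)*(?X - k) \<le> \<mu>*((1-k) - k) + (1-\<mu>)*(?X - k)"
      using mult_left_mono[OF M, of \<mu>] mu0 by (simp add: algebra_simps)
    also have "\<dots> \<le> (1-\<pi>)*(1-k) + \<pi>*\<mu>*(1-k) + \<pi>*(1-\<mu>)*?X"
      by (rule T_aux) (use kpos in simp)
    finally show ?thesis using P by linarith
  next
    case False
    have M: "?M \<le> \<rho>" using False by auto
    have "\<mu>*(?M - k) + (1-\<mu>)*(?X - k) \<le> \<mu>*(\<rho> - k) + (1-\<mu>)*(?X - k)"
      using mult_left_mono[OF M, of \<mu>] mu0 by (simp add: algebra_simps)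
    moreover have "(1-\<pi>)*(1-\<mu>)*?X \<le> (1-\<pi>)*(1-\<mu>)*1" by (rule mult_left_mono) (use X_le1 pi1 mu1 in auto)
    moreover have "(1-\<pi>)*(1-k) + \<pi>*\<mu>*(1-k) + \<pi>*(1-\<mu>)*?X - (\<mu>*(\<rho> - k) + (1-\<mu>)*(?X - k))
        = \<pi>*k*(1-\<mu>) + \<mu>*(1-\<rho>) + (1-\<pi>)*(1-\<mu>)*1 - (1-\<pi>)*(1-\<mu>)*?X"
      by (simp add: algebra_simps)
    moreover have "0 \<le> \<pi>*k*(1-\<mu>)" "0 \<le> \<mu>*(1-\<rho>)" using pi0 kpos mu1 mu0 rho1 by simp_all
    ultimately show ?thesis using P by linarith
  qed
next
  case False
  let ?M = "if \<not> \<sigma>2 (Some True) \<and> xh (Some True) None then \<rho> else 1-k"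
  let ?X = "\<pi> + (1-\<pi>)*\<rho>"
  have B: "P_payoff \<mu> \<rho> \<pi> k False \<sigma>2 xh \<le> (1-\<pi>)*(1-k) + \<pi>*\<mu>*?M + \<pi>*(1-\<mu>)*?X"
    using bound_F[of \<sigma>2 xh] IC False by simp
  show ?thesis
  proof (cases "?M \<le> 1-k")
    case True
    have "\<pi>*\<mu>*?M \<le> \<pi>*\<mu>*(1-k)" by (rule mult_left_mono[OF True]) (use pi0 mu0 in simp)
    then show ?thesis using B False by simp
  next
    case Mg: False
    then have n2: "\<not> \<sigma>2 (Some True)" and x: "xh (Some True) None" and rk: "1-k < \<rho>"
      by (auto split: if_splits)
    then have nGB: "\<pi>*c < (1-\<pi>)*(1-\<rho>)*(\<mu>-(1-\<mu>)*(1-\<pi>))" using kk by auto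
    have S: "P_payoff \<mu> \<rho> \<pi> k False \<sigma>2 xh \<le> (1-\<pi>)*mm \<mu> \<rho> + \<pi>*\<mu>*\<rho> + \<pi>*(1-\<mu>)*?X"
    proof -
      have IC': "IC \<mu> \<rho> \<pi> c False \<sigma>2 xh" using IC False by simp
      show ?thesis by (rule sub[OF IC' n2 x nGB])
    qed
    have b0: "\<pi>*(1 - mm \<mu> \<rho>) \<le> 1 - k - mm \<mu> \<rho>" using k3 by (simp add: algebra_simps)
    have b: "(1-\<pi>)*(\<pi>*(1 - mm \<mu> \<rho>)) \<le> (1-\<pi>)*(1 - k - mm \<mu> \<rho>)"
      by (rule mult_left_mono[OF b0]) (use pi1 in simp)
    have cc: "\<pi>*k \<le> \<pi>*((1-\<pi>)*(1 - mm \<mu> \<rho>))" by (rule mult_left_mono[OF k3]) (use pi0 in simp)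
    have d0: "\<mu>*(\<rho> - 1 + k) \<le> 1*(\<rho> - 1 + k)" by (rule mult_right_mono) (use mu1 rk in auto)
    have d1: "\<pi>*(\<mu>*(\<rho> - 1 + k)) \<le> \<pi>*k" by (rule mult_left_mono) (use d0 rho1 pi0 in auto)
    have e1: "\<pi>*((1-\<pi>)*(1 - mm \<mu> \<rho>)) = (1-\<pi>)*(\<pi>*(1 - mm \<mu> \<rho>))" by (simp add: mult_ac)
    have "(1-\<pi>)*(1-k) + \<pi>*\<mu>*(1-k) + \<pi>*(1-\<mu>)*?X - ((1-\<pi>)*mm \<mu> \<rho> + \<pi>*\<mu>*\<rho> + \<pi>*(1-\<mu>)*?X)
       = (1-\<pi>)*(1 - k - mm \<mu> \<rho>) - \<pi>*(\<mu>*(\<rho> - 1 + k))" by (simp add: algebra_simps)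
    then show ?thesis using S b cc d1 e1 False by simp
  qed
qed


lemma agd_N: "ag (mm \<mu> \<rho>) \<pi> c (\<lambda>r2. r2 = Some True) e \<le> mm \<mu> \<rho> - c"
  using c2 by (cases e) (simp_all add: ag_xd algebra_simps)
lemma agd_0: "ag (1-\<rho>) \<pi> c (\<lambda>r2. r2 = Some True) e \<le> \<pi>*(1-\<rho>)"
  using c1 by (cases e) (simp_all add: ag_xd algebra_simps)
lemma agd_1: "ag \<rho> \<pi> c (\<lambda>r2. r2 = Some True) e \<le> \<rho> - c"
  using cl by (cases e) (simp_all add: ag_xd algebra_simps)
lemma ag1: "ag p \<pi> c x e \<le> 1" if "0 \<le> p" "p \<le> 1"
  by (rule ag_le1) (use that pi0 pi1 cpos in auto)

lemma IC_A:
  assumes GB: "(1-\<pi>)*(1-\<rho>)*(\<mu>-(1-\<mu>)*(1-\<pi>)) \<le> \<pi>*c"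
  shows "IC \<mu> \<rho> \<pi> c False (\<lambda>r1. r1 = None) (\<lambda>r1 r2. r1 = Some True \<or> (r1 \<noteq> Some True \<and> r2 = Some True))"
proof (rule IC_intro)
  show "0 \<le> \<mu>" "\<mu> \<le> 1" "0 \<le> \<rho>" "\<rho> \<le> 1" "0 \<le> \<pi>" "\<pi> \<le> 1" by (rule par)+
  show "\<And>r1. r1 = None \<Longrightarrow> \<not> (r1 = Some True \<or> (r1 \<noteq> Some True \<and> None = Some True))" by simp
  show "\<And>r1 s2. r1 = Some True \<or> (r1 \<noteq> Some True \<and> None = Some True) \<Longrightarrow> r1 = Some True \<or> (r1 \<noteq> Some True \<and> s2 = Some True)"
    by simp
  let ?xh = "\<lambda>r1 r2. r1 = Some True \<or> (r1 \<noteq> Some True \<and> r2 = Some True)"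
  have x1: "?xh (Some True) = (\<lambda>r2. True)" by simp
  have xd: "r \<noteq> Some True \<Longrightarrow> ?xh r = (\<lambda>r2. r2 = Some True)" for r by auto
  show "gv \<mu> \<rho> \<pi> c ?xh False s1 r e \<le> gv \<mu> \<rho> \<pi> c ?xh False s1 s1 (s1 = None)"
    if r: "r = None \<or> r = s1" for s1 r e
  proof (cases s1)
    case None
    then have "r = None" using r by simp
    then show ?thesis using None mult_left_mono[OF agd_N[of e], of "1-\<pi>"] pi1
      by (simp add: gv_FN xd ag_xd)
  next
    case (Some b)
    show ?thesis
    proof (cases b)
      case False
      then have "r \<noteq> Some True" using r Some by auto
      then show ?thesis using Some False mult_left_mono[OF agd_0[of e], of "\<pi>*(1-\<mu>)"] pi0 mu1
        by (simp add: gv_F0 xd ag_xd)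
    next
      case True
      have "ag \<rho> \<pi> c (?xh r) e \<le> 1" by (rule ag1) (use rho1 rho0 in auto)
      then show ?thesis using Some True mult_left_mono[of "ag \<rho> \<pi> c (?xh r) e" 1 "\<pi>*\<mu>"] pi0 mu0
        by (simp add: gv_F1 x1 ag_x1)
    qed
  qed
  show "gv \<mu> \<rho> \<pi> c ?xh True (Some False) r0 e0 + gv \<mu> \<rho> \<pi> c ?xh True (Some True) r1 e1
        \<le> gv \<mu> \<rho> \<pi> c ?xh False None None (None = None) + gv \<mu> \<rho> \<pi> c ?xh False (Some False) (Some False) (Some False = None)
          + gv \<mu> \<rho> \<pi> c ?xh False (Some True) (Some True) (Some True = None)"
    if "r0 = None \<or> r0 = Some False" "r1 = None \<or> r1 = Some True" for r0 e0 r1 e1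
  proof -
    have r0: "r0 \<noteq> Some True" using that by auto
    have a: "gv \<mu> \<rho> \<pi> c ?xh True (Some False) r0 e0 \<le> (1-\<mu>)*(\<pi>*(1-\<rho>) - c)"
      using mult_left_mono[of "ag (1-\<rho>) \<pi> c (\<lambda>r2. r2 = Some True) e0 - c" "\<pi>*(1-\<rho>) - c" "1-\<mu>"] agd_0[of e0] mu1
      by (simp add: gv_T0 xd[OF r0])
    have "ag \<rho> \<pi> c (?xh r1) e1 \<le> 1" by (rule ag1) (use rho1 rho0 in auto)
    then have b: "gv \<mu> \<rho> \<pi> c ?xh True (Some True) r1 e1 \<le> \<mu>*(1 - c)"
      using mult_left_mono[of "ag \<rho> \<pi> c (?xh r1) e1 - c" "1 - c" \<mu>] mu0 by (simp add: gv_T1)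
    have R: "gv \<mu> \<rho> \<pi> c ?xh False None None (None = None) + gv \<mu> \<rho> \<pi> c ?xh False (Some False) (Some False) (Some False = None)
          + gv \<mu> \<rho> \<pi> c ?xh False (Some True) (Some True) (Some True = None)
          = (1-\<pi>)*(mm \<mu> \<rho> - c) + \<pi>*(1-\<mu>)*(\<pi>*(1-\<rho>)) + \<pi>*\<mu>"
      by (simp add: gv_FN gv_F0 gv_F1 ag_def algebra_simps)
    have eq: "(1-\<pi>)*(mm \<mu> \<rho> - c) + \<pi>*(1-\<mu>)*(\<pi>*(1-\<rho>)) + \<pi>*\<mu> - ((1-\<mu>)*(\<pi>*(1-\<rho>) - c) + \<mu>*(1 - c))
        = \<pi>*c - (1-\<pi>)*(1-\<rho>)*(\<mu>-(1-\<mu>)*(1-\<pi>))"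
      by (simp add: mm_def algebra_simps)
    have "0 \<le> (1-\<pi>)*(mm \<mu> \<rho> - c) + \<pi>*(1-\<mu>)*(\<pi>*(1-\<rho>)) + \<pi>*\<mu> - ((1-\<mu>)*(\<pi>*(1-\<rho>) - c) + \<mu>*(1 - c))"
      unfolding eq using GB by simp
    then have le: "(1-\<mu>)*(\<pi>*(1-\<rho>) - c) + \<mu>*(1 - c) \<le> (1-\<pi>)*(mm \<mu> \<rho> - c) + \<pi>*(1-\<mu>)*(\<pi>*(1-\<rho>)) + \<pi>*\<mu>"
      by linarith
    show ?thesis unfolding R by (rule order_trans[OF add_mono[OF a b] le])
  qed
qed

lemma IC_B:
  shows "IC \<mu> \<rho> \<pi> c False (\<lambda>r1. r1 \<noteq> Some False) (\<lambda>r1 r2. r2 = Some True)"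
proof (rule IC_intro)
  show "0 \<le> \<mu>" "\<mu> \<le> 1" "0 \<le> \<rho>" "\<rho> \<le> 1" "0 \<le> \<pi>" "\<pi> \<le> 1" by (rule par)+
  show "\<And>r1. r1 \<noteq> Some False \<Longrightarrow> \<not> (None = Some True)" by simp
  show "\<And>r1 s2. None = Some True \<Longrightarrow> s2 = Some True" by simp
  let ?xh = "\<lambda>r1 r2::bool option. r2 = Some True"
  show "gv \<mu> \<rho> \<pi> c ?xh False s1 r e \<le> gv \<mu> \<rho> \<pi> c ?xh False s1 s1 (s1 \<noteq> Some False)"
    if r: "r = None \<or> r = s1" for s1 r e
  proof (cases s1)
    case None
    then show ?thesis using mult_left_mono[OF agd_N[of e], of "1-\<pi>"] pi1
      by (simp add: gv_FN ag_xd)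
  next
    case (Some b)
    show ?thesis
    proof (cases b)
      case False
      then show ?thesis using Some mult_left_mono[OF agd_0[of e], of "\<pi>*(1-\<mu>)"] pi0 mu1
        by (simp add: gv_F0 ag_xd)
    next
      case True
      then show ?thesis using Some mult_left_mono[OF agd_1[of e], of "\<pi>*\<mu>"] pi0 mu0
        by (simp add: gv_F1 ag_xd)
    qed
  qed
  show "gv \<mu> \<rho> \<pi> c ?xh True (Some False) r0 e0 + gv \<mu> \<rho> \<pi> c ?xh True (Some True) r1 e1
        \<le> gv \<mu> \<rho> \<pi> c ?xh False None None (None \<noteq> Some False) + gv \<mu> \<rho> \<pi> c ?xh False (Some False) (Some False) (Some False \<noteq> Some False)
          + gv \<mu> \<rho> \<pi> c ?xh False (Some True) (Some True) (Some True \<noteq> Some False)"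
    for r0 e0 r1 e1
  proof -
    have a: "gv \<mu> \<rho> \<pi> c ?xh True (Some False) r0 e0 \<le> (1-\<mu>)*(\<pi>*(1-\<rho>) - c)"
      using mult_left_mono[of "ag (1-\<rho>) \<pi> c (\<lambda>r2. r2 = Some True) e0 - c" "\<pi>*(1-\<rho>) - c" "1-\<mu>"] agd_0[of e0] mu1
      by (simp add: gv_T0)
    have b: "gv \<mu> \<rho> \<pi> c ?xh True (Some True) r1 e1 \<le> \<mu>*(\<rho> - c - c)"
      using mult_left_mono[of "ag \<rho> \<pi> c (\<lambda>r2. r2 = Some True) e1 - c" "\<rho> - c - c" \<mu>] agd_1[of e1] mu0
      by (simp add: gv_T1)
    have R: "gv \<mu> \<rho> \<pi> c ?xh False None None (None \<noteq> Some False) + gv \<mu> \<rho> \<pi> c ?xh False (Some False) (Some False) (Some False \<noteq> Some False)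
          + gv \<mu> \<rho> \<pi> c ?xh False (Some True) (Some True) (Some True \<noteq> Some False)
          = (1-\<pi>)*(mm \<mu> \<rho> - c) + \<pi>*(1-\<mu>)*(\<pi>*(1-\<rho>)) + \<pi>*\<mu>*(\<rho> - c)"
      by (simp add: gv_FN gv_F0 gv_F1 ag_def algebra_simps)
    have eq: "(1-\<pi>)*(mm \<mu> \<rho> - c) + \<pi>*(1-\<mu>)*(\<pi>*(1-\<rho>)) + \<pi>*\<mu>*(\<rho> - c) - ((1-\<mu>)*(\<pi>*(1-\<rho>) - c) + \<mu>*(\<rho> - c - c))
        = (1-\<pi>)*(1-\<pi>)*(1-\<rho>)*(1-\<mu>) + c*(\<pi> + \<mu>*(1-\<pi>))"
      by (simp add: mm_def algebra_simps)
    have pos: "0 \<le> (1-\<pi>)*(1-\<pi>)*(1-\<rho>)*(1-\<mu>)" "0 \<le> c*(\<pi> + \<mu>*(1-\<pi>))"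
      using pi0 pi1 rho1 mu0 mu1 cpos by simp_all
    show ?thesis using a b R eq pos by linarith
  qed
qed

lemma PA: "P_payoff \<mu> \<rho> \<pi> k False (\<lambda>r1. r1 = None) (\<lambda>r1 r2. r1 = Some True \<or> (r1 \<noteq> Some True \<and> r2 = Some True))
   = (1-\<pi>)*(1-k) + \<pi>*\<mu>*\<rho> + \<pi>*(1-\<mu>)*(\<pi> + (1-\<pi>)*\<rho>)"
  by (simp add: P_F u_def algebra_simps)

lemma PB: "P_payoff \<mu> \<rho> \<pi> k False (\<lambda>r1. r1 \<noteq> Some False) (\<lambda>r1 r2. r2 = Some True)
   = (1-\<pi>)*(1-k) + \<pi>*\<mu>*(1-k) + \<pi>*(1-\<mu>)*(\<pi> + (1-\<pi>)*\<rho>)"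
  by (simp add: P_F u_def algebra_simps)

end

theorem proposition4:
  fixes \<mu>0 \<rho> \<pi> c k :: real
  defines "\<kappa> \<equiv> k / (1 - \<pi>)"
      and "\<gamma> \<equiv> c / (1 - \<pi>)"
      and "\<mu>2e \<equiv> \<rho> * \<mu>0 + (1 - \<rho>) * (1 - \<mu>0)"
      and "\<kappa>bar \<equiv> (1 - \<rho>) / (1 - \<pi>)"
      and "\<gamma>bar \<equiv> (1 - \<rho>) * (\<mu>0 - (1 - \<mu>0) * (1 - \<pi>)) / \<pi>"
  assumes "0 < \<mu>0" "\<mu>0 < 1"
      and "1/2 < \<rho>" "\<rho> < 1"
      and "0 < \<pi>" "\<pi> < 1"
      and "0 < c" "0 < k"
      and "1 - \<rho> < \<kappa>" "\<kappa> \<le> min \<mu>2e (1 - \<mu>2e)"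
      and "1 - \<rho> < \<gamma>" "\<gamma> \<le> \<mu>2e"
  shows
    "(\<kappa> > \<kappa>bar \<and> \<gamma> \<ge> \<gamma>bar \<longrightarrow>
        optimal_IC \<mu>0 \<rho> \<pi> c k False (\<lambda>r1. r1 = None)
          (\<lambda>r1 r2. r1 = Some True \<or> (r1 \<noteq> Some True \<and> r2 = Some True))) \<and>
     ((1 - \<rho> < \<kappa> \<and> \<kappa> < \<kappa>bar) \<or> \<gamma> < \<gamma>bar \<longrightarrow>
        optimal_IC \<mu>0 \<rho> \<pi> c k False (\<lambda>r1. r1 \<noteq> Some False)
          (\<lambda>r1 r2. r2 = Some True)) \<and>
     (\<kappa> = \<kappa>bar \<and> \<gamma> \<ge> \<gamma>bar \<longrightarrow>
        optimal_IC \<mu>0 \<rho> \<pi> c k False (\<lambda>r1. r1 = None)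
          (\<lambda>r1 r2. r1 = Some True \<or> (r1 \<noteq> Some True \<and> r2 = Some True)) \<and>
        optimal_IC \<mu>0 \<rho> \<pi> c k False (\<lambda>r1. r1 \<noteq> Some False)
          (\<lambda>r1 r2. r2 = Some True))"
proof -
  note A = assms(6-17)
  have p1: "0 < 1 - \<pi>" using A by simp
  have mmeq: "\<mu>2e = mm \<mu>0 \<rho>" unfolding \<mu>2e_def mm_def by simp
  have k1: "(1-\<rho>)*(1-\<pi>) < k" using A(9) p1 unfolding \<kappa>_def by (simp add: pos_less_divide_eq)
  have k2: "k \<le> (1-\<pi>)*mm \<mu>0 \<rho>" using A(10) p1 unfolding \<kappa>_def mmeq by (simp add: pos_divide_le_eq mult.commute)
  have k3: "k \<le> (1-\<pi>)*(1 - mm \<mu>0 \<rho>)" using A(10) p1 unfolding \<kappa>_def mmeq by (simp add: pos_divide_le_eq mult.commute)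
  have c1: "(1-\<rho>)*(1-\<pi>) < c" using A(11) p1 unfolding \<gamma>_def by (simp add: pos_less_divide_eq)
  have c2: "c \<le> (1-\<pi>)*mm \<mu>0 \<rho>" using A(12) p1 unfolding \<gamma>_def mmeq by (simp add: pos_divide_le_eq mult.commute)
  note ctx = A(1-8) k1 k2 k3 c1 c2
  have kb1: "\<kappa>bar < \<kappa> \<longleftrightarrow> 1-\<rho> < k" unfolding \<kappa>_def \<kappa>bar_def using p1 by (simp add: divide_less_cancel)
  have kb2: "\<kappa> < \<kappa>bar \<longleftrightarrow> k < 1-\<rho>" unfolding \<kappa>_def \<kappa>bar_def using p1 by (simp add: divide_less_cancel)
  have kb3: "\<kappa> = \<kappa>bar \<longleftrightarrow> k = 1-\<rho>" unfolding \<kappa>_def \<kappa>bar_def using p1 by simp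
  have pos: "0 < \<pi>*(1-\<pi>)" using A p1 by simp
  have e1: "\<gamma>bar*(\<pi>*(1-\<pi>)) = (1-\<pi>)*(1-\<rho>)*(\<mu>0-(1-\<mu>0)*(1-\<pi>))"
    unfolding \<gamma>bar_def using A(5) by (simp add: field_simps)
  have e2: "\<gamma>*(\<pi>*(1-\<pi>)) = \<pi>*c" unfolding \<gamma>_def using p1 by (simp add: field_simps)
  have gb: "\<gamma>bar \<le> \<gamma> \<longleftrightarrow> (1-\<pi>)*(1-\<rho>)*(\<mu>0-(1-\<mu>0)*(1-\<pi>)) \<le> \<pi>*c"
    using mult_le_cancel_right_pos[OF pos, of \<gamma>bar \<gamma>] e1 e2 by simp
  have optA: "optimal_IC \<mu>0 \<rho> \<pi> c k False (\<lambda>r1. r1 = None)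
          (\<lambda>r1 r2. r1 = Some True \<or> (r1 \<noteq> Some True \<and> r2 = Some True))"
    if "1-\<rho> \<le> k" "(1-\<pi>)*(1-\<rho>)*(\<mu>0-(1-\<mu>0)*(1-\<pi>)) \<le> \<pi>*c"
    unfolding optimal_IC_def
    using IC_A[OF ctx that(2)] FA[OF ctx that(1)] PA[OF ctx] by auto
  have optB: "optimal_IC \<mu>0 \<rho> \<pi> c k False (\<lambda>r1. r1 \<noteq> Some False) (\<lambda>r1 r2. r2 = Some True)"
    if "k \<le> 1-\<rho> \<or> \<pi>*c < (1-\<pi>)*(1-\<rho>)*(\<mu>0-(1-\<mu>0)*(1-\<pi>))"
    unfolding optimal_IC_def
    using IC_B[OF ctx] FB[OF ctx that] PB[OF ctx] by auto
  show ?thesis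
  proof (intro conjI impI)
    assume "\<kappa>bar < \<kappa> \<and> \<gamma>bar \<le> \<gamma>"
    then show "optimal_IC \<mu>0 \<rho> \<pi> c k False (\<lambda>r1. r1 = None)
          (\<lambda>r1 r2. r1 = Some True \<or> (r1 \<noteq> Some True \<and> r2 = Some True))"
      using optA kb1 gb by auto
  next
    assume "1 - \<rho> < \<kappa> \<and> \<kappa> < \<kappa>bar \<or> \<gamma> < \<gamma>bar"
    then show "optimal_IC \<mu>0 \<rho> \<pi> c k False (\<lambda>r1. r1 \<noteq> Some False) (\<lambda>r1 r2. r2 = Some True)"
      using optB kb2 gb by (auto simp: not_le[symmetric])
  next
    assume "\<kappa> = \<kappa>bar \<and> \<gamma>bar \<le> \<gamma>"
    then show "optimal_IC \<mu>0 \<rho> \<pi> c k False (\<lambda>r1. r1 = None)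
          (\<lambda>r1 r2. r1 = Some True \<or> (r1 \<noteq> Some True \<and> r2 = Some True))"
      using optA kb3 gb by auto
  next
    assume "\<kappa> = \<kappa>bar \<and> \<gamma>bar \<le> \<gamma>"
    then show "optimal_IC \<mu>0 \<rho> \<pi> c k False (\<lambda>r1. r1 \<noteq> Some False) (\<lambda>r1 r2. r2 = Some True)"
      using optB kb3 by auto
  qed
qed

end
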